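(* Let $\|\cdot\|$ be a norm on $\mathbb{R}^n$ whose dual norm $\|\cdot\|^*$ is an algebra norm. Let $a<b$ and let $f\in\mathbb{R}^n$ take values in $[a,b]$. Let $\eta:\mathbb{R}_+\to\mathbb{R}_+$ be a positive decreasing function and let $\epsilon>0$. Then there is a constant $C_0$, depending on $\eta$ and $\epsilon$ only, such that $f$ can be written as $f=f_1+f_2+f_3$ with $\|f_1\|^*\le C_0$, $\|f_2\|\le\eta(\|f_1\|^* )$ and $\|f_3\|_2\le\epsilon$, and such that both $f_1$ and $f_1+f_3$ take values in $[a,b]$.
   Context: Functions in $\mathbb{R}^n$ are functions on $\{1,\dots,n\}$, with $\langle f,g\rangle=\frac1n\sum_xf(x)g(x)$ and $\|f\|_2=(\frac1n\sum_x f(x)^2)^{1/2}$. The dual norm of $\|\cdot\|$ is $\|\phi\|^*=\max\{\langle f,\phi\rangle:\|f\|\le1\}$. An algebra norm on $\mathbb{R}^n$ is a norm $|\cdot|$ such that $|fg|\le|f||g|$ for all $f,g$ (pointwise product) and $|\mathbf 1|=1$, where $\mathbf 1$ is the constant function $1$. *)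

theory Defs
  imports Complex_Main
begin

text \<open>Vectors of R^n are represented as functions nat => real supported on {0..<n}
  (index set {0,...,n-1} instead of {1,...,n}).\<close>

definition vecs :: "nat \<Rightarrow> (nat \<Rightarrow> real) set" where
  "vecs n = {f. \<forall>i\<ge>n. f i = 0}"

definition ip :: "nat \<Rightarrow> (nat \<Rightarrow> real) \<Rightarrow> (nat \<Rightarrow> real) \<Rightarrow> real" where
  "ip n f g = (\<Sum>i<n. f i * g i) / real n"

definition l2norm :: "nat \<Rightarrow> (nat \<Rightarrow> real) \<Rightarrow> real" where
  "l2norm n f = sqrt (\<Sum>i<n. (f i)^2 / real n)"

definition one_vec :: "nat \<Rightarrow> nat \<Rightarrow> real" where
  "one_vec n = (\<lambda>i. if i < n then 1 else 0)"

definition pmult :: "(nat \<Rightarrow> real) \<Rightarrow> (nat \<Rightarrow> real) \<Rightarrow> nat \<Rightarrow> real" where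
  "pmult f g = (\<lambda>i. f i * g i)"

definition is_norm_on :: "nat \<Rightarrow> ((nat \<Rightarrow> real) \<Rightarrow> real) \<Rightarrow> bool" where
  "is_norm_on n N \<longleftrightarrow>
     (\<forall>f\<in>vecs n. 0 \<le> N f) \<and>
     (\<forall>f\<in>vecs n. N f = 0 \<longleftrightarrow> f = (\<lambda>_. 0)) \<and>
     (\<forall>f\<in>vecs n. \<forall>c. N (\<lambda>i. c * f i) = \<bar>c\<bar> * N f) \<and>
     (\<forall>f\<in>vecs n. \<forall>g\<in>vecs n. N (\<lambda>i. f i + g i) \<le> N f + N g)"

definition dual_norm :: "nat \<Rightarrow> ((nat \<Rightarrow> real) \<Rightarrow> real) \<Rightarrow> (nat \<Rightarrow> real) \<Rightarrow> real" where
  "dual_norm n N \<phi> = Sup {ip n f \<phi> | f. f \<in> vecs n \<and> N f \<le> 1}"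

definition is_algebra_norm_on :: "nat \<Rightarrow> ((nat \<Rightarrow> real) \<Rightarrow> real) \<Rightarrow> bool" where
  "is_algebra_norm_on n M \<longleftrightarrow> is_norm_on n M \<and>
     (\<forall>f\<in>vecs n. \<forall>g\<in>vecs n. M (pmult f g) \<le> M f * M g) \<and>
     M (one_vec n) = 1"

end

theory Submission
  imports Defs "HOL-Analysis.Analysis"
begin


definition evec :: "nat \<Rightarrow> nat \<Rightarrow> real" where
  "evec i = (\<lambda>j. if j = i then 1 else 0)"

lemma vecs_iff: "f \<in> vecs n \<longleftrightarrow> (\<forall>i\<ge>n. f i = 0)" by (simp add: vecs_def)

lemma vecs_zero[simp]: "(\<lambda>_. 0) \<in> vecs n" by (simp add: vecs_def)
lemma vecs_add[intro]: "f \<in> vecs n \<Longrightarrow> g \<in> vecs n \<Longrightarrow> (\<lambda>i. f i + g i) \<in> vecs n"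
  by (simp add: vecs_def)
lemma vecs_diff[intro]: "f \<in> vecs n \<Longrightarrow> g \<in> vecs n \<Longrightarrow> (\<lambda>i. f i - g i) \<in> vecs n"
  by (simp add: vecs_def)
lemma vecs_scale[intro]: "f \<in> vecs n \<Longrightarrow> (\<lambda>i. c * f i) \<in> vecs n"
  by (simp add: vecs_def)
lemma vecs_neg[intro]: "f \<in> vecs n \<Longrightarrow> (\<lambda>i. - f i) \<in> vecs n"
  by (simp add: vecs_def)
lemma vecs_sum[intro]: "(\<And>k. k \<in> I \<Longrightarrow> v k \<in> vecs n) \<Longrightarrow> (\<lambda>j. \<Sum>k\<in>I. v k j) \<in> vecs n"
  by (simp add: vecs_def)
lemma vecs_evec[intro]: "i < n \<Longrightarrow> evec i \<in> vecs n"
  by (simp add: vecs_def evec_def)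
lemma vecs_pmult[intro]: "f \<in> vecs n \<Longrightarrow> pmult f g \<in> vecs n"
  by (simp add: vecs_def pmult_def)
lemma vecs_one[intro]: "one_vec n \<in> vecs n"
  unfolding vecs_def Defs.one_vec_def by auto

context
  fixes n :: nat and P :: "(nat \<Rightarrow> real) \<Rightarrow> real"
  assumes P: "is_norm_on n P"
begin

lemma P_nonneg: "f \<in> vecs n \<Longrightarrow> 0 \<le> P f"
  using P by (simp add: is_norm_on_def)
lemma P_zero_iff: "f \<in> vecs n \<Longrightarrow> P f = 0 \<longleftrightarrow> f = (\<lambda>_. 0)"
  using P by (simp add: is_norm_on_def)
lemma P_zero[simp]: "P (\<lambda>_. 0) = 0"
  using P_zero_iff[of "\<lambda>_. 0"] by simp
lemma P_hom: "f \<in> vecs n \<Longrightarrow> P (\<lambda>i. c * f i) = \<bar>c\<bar> * P f"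
  using P by (simp add: is_norm_on_def)
lemma P_tri: "f \<in> vecs n \<Longrightarrow> g \<in> vecs n \<Longrightarrow> P (\<lambda>i. f i + g i) \<le> P f + P g"
  using P by (simp add: is_norm_on_def)
lemma P_neg: "f \<in> vecs n \<Longrightarrow> P (\<lambda>i. - f i) = P f"
  using P_hom[of f "-1"] by simp
lemma P_diff: "f \<in> vecs n \<Longrightarrow> g \<in> vecs n \<Longrightarrow> P (\<lambda>i. f i - g i) \<le> P f + P g"
  using P_tri[of f "\<lambda>i. - g i"] P_neg[of g] by auto
lemma P_sum: "finite I \<Longrightarrow> (\<And>k. k \<in> I \<Longrightarrow> v k \<in> vecs n) \<Longrightarrow>
   P (\<lambda>j. \<Sum>k\<in>I. v k j) \<le> (\<Sum>k\<in>I. P (v k))"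
proof (induction I rule: finite_induct)
  case empty then show ?case by simp
next
  case (insert x F)
  have "P (\<lambda>j. \<Sum>k\<in>insert x F. v k j) = P (\<lambda>j. v x j + (\<Sum>k\<in>F. v k j))"
    using insert by simp
  also have "\<dots> \<le> P (v x) + P (\<lambda>j. \<Sum>k\<in>F. v k j)"
    using insert by (intro P_tri) auto
  also have "\<dots> \<le> P (v x) + (\<Sum>k\<in>F. P (v k))" using insert by auto
  finally show ?case using insert by simp
qed
lemma P_convex:
  assumes "f \<in> vecs n" "g \<in> vecs n" "0 \<le> s" "0 \<le> t"
  shows "P (\<lambda>i. s * f i + t * g i) \<le> s * P f + t * P g"
  using P_tri[of "\<lambda>i. s * f i" "\<lambda>i. t * g i"] P_hom[of f s] P_hom[of g t] assms by auto

lemma vec_expand: "x \<in> vecs n \<Longrightarrow> x = (\<lambda>j. \<Sum>i<n. x i * evec i j)"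
  by (auto simp: vecs_def evec_def fun_eq_iff if_distrib sum.delta cong: if_cong)

lemma P_coord_bound: "x \<in> vecs n \<Longrightarrow> P x \<le> (\<Sum>i<n. \<bar>x i\<bar> * P (evec i))"
proof -
  assume x: "x \<in> vecs n"
  have "P x = P (\<lambda>j. \<Sum>i<n. x i * evec i j)" using vec_expand[OF x] by simp
  also have "\<dots> \<le> (\<Sum>i<n. P (\<lambda>j. x i * evec i j))" by (rule P_sum) auto
  also have "\<dots> = (\<Sum>i<n. \<bar>x i\<bar> * P (evec i))" by (intro sum.cong refl P_hom) auto
  finally show ?thesis .
qed

lemma P_evec_pos: "i < n \<Longrightarrow> 0 < P (evec i)"
proof -
  assume i: "i < n"
  have "evec i \<noteq> (\<lambda>_. 0)" by (auto simp: evec_def fun_eq_iff)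
  then show ?thesis using P_zero_iff[of "evec i"] P_nonneg[of "evec i"] i vecs_evec[of i n]
    by (simp add: order_less_le)
qed

end


definition psi :: "real \<Rightarrow> real \<Rightarrow> real \<Rightarrow> real" where
  "psi a b x = - sqrt ((x - a) * (b - x))"
definition dpsi :: "real \<Rightarrow> real \<Rightarrow> real \<Rightarrow> real" where
  "dpsi a b x = (x - (a + b) / 2) / sqrt ((x - a) * (b - x))"
definition GG :: "real \<Rightarrow> real \<Rightarrow> real \<Rightarrow> real" where
  "GG a b y = (a + b) / 2 + (b - a) / 2 * (y / sqrt (1 + y\<^sup>2))"

context
  fixes a b :: real
  assumes ab: "a < b"
begin

lemma prod_eq: "(x - a) * (b - x) = ((b - a)/2)\<^sup>2 - (x - (a+b)/2)\<^sup>2"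
  by (simp add: power2_eq_square field_simps)

lemma psi_range:
  assumes "a \<le> x" "x \<le> b"
  shows "- ((b - a)/2) \<le> psi a b x \<and> psi a b x \<le> 0"
proof -
  have "(x - a) * (b - x) \<le> ((b - a)/2)\<^sup>2" using prod_eq[of x] by simp
  then have "sqrt ((x - a) * (b - x)) \<le> sqrt (((b - a)/2)\<^sup>2)" by (rule real_sqrt_le_mono)
  also have "\<dots> = (b - a)/2" using ab by simp
  finally have "sqrt ((x - a) * (b - x)) \<le> (b - a)/2" .
  then show ?thesis using assms by (simp add: psi_def)
qed

lemma psi_ends: "psi a b a = 0" "psi a b b = 0"
  by (simp_all add: psi_def)

lemma sq_le: "\<bar>z::real\<bar> \<le> r \<Longrightarrow> z\<^sup>2 \<le> r\<^sup>2"
  by (metis abs_ge_zero power2_abs power_mono)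

lemma key_cs:
  fixes r z w :: real
  assumes "\<bar>z\<bar> \<le> r" "\<bar>w\<bar> \<le> r"
  shows "sqrt (r\<^sup>2 - z\<^sup>2) * sqrt (r\<^sup>2 - w\<^sup>2) \<le> r\<^sup>2 - w * z"
proof -
  have r: "0 \<le> r" using assms by simp
  have wz: "\<bar>w * z\<bar> \<le> r * r" using assms by (simp add: abs_mult mult_mono)
  have h: "(r\<^sup>2 - z\<^sup>2) * (r\<^sup>2 - w\<^sup>2) \<le> (r\<^sup>2 - w * z)\<^sup>2"
  proof -
    have "(r\<^sup>2 - w * z)\<^sup>2 - (r\<^sup>2 - z\<^sup>2) * (r\<^sup>2 - w\<^sup>2) = r\<^sup>2 * (z - w)\<^sup>2"
      by (simp add: power2_eq_square algebra_simps)
    moreover have "0 \<le> r\<^sup>2 * (z - w)\<^sup>2" by simp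
    ultimately show ?thesis by (simp add: field_simps)
  qed
  have "sqrt (r\<^sup>2 - z\<^sup>2) * sqrt (r\<^sup>2 - w\<^sup>2) = sqrt ((r\<^sup>2 - z\<^sup>2) * (r\<^sup>2 - w\<^sup>2))"
    by (simp add: real_sqrt_mult)
  also have "\<dots> \<le> sqrt ((r\<^sup>2 - w * z)\<^sup>2)" using h by (rule real_sqrt_le_mono)
  also have "\<dots> = r\<^sup>2 - w * z" using wz by (simp add: power2_eq_square)
  finally show ?thesis .
qed

lemma psi_tangent:
  assumes x: "a \<le> x" "x \<le> b" and y: "a < y" "y < b"
  shows "psi a b y + dpsi a b y * (x - y) \<le> psi a b x"
proof -
  define r where "r = (b - a)/2"
  define z where "z = x - (a+b)/2"
  define w where "w = y - (a+b)/2"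
  have pz: "(x - a) * (b - x) = r\<^sup>2 - z\<^sup>2" unfolding r_def z_def by (rule prod_eq)
  have pw: "(y - a) * (b - y) = r\<^sup>2 - w\<^sup>2" unfolding r_def w_def by (rule prod_eq)
  define p where "p = sqrt (r\<^sup>2 - z\<^sup>2)"
  define q where "q = sqrt (r\<^sup>2 - w\<^sup>2)"
  have qpos: "0 < (y - a) * (b - y)" using y by simp
  hence q0: "0 < q" unfolding q_def using pw by simp
  have qq: "q * q = r\<^sup>2 - w\<^sup>2" unfolding q_def real_sqrt_mult_self using qpos pw by simp
  have zr: "\<bar>z\<bar> \<le> r" "\<bar>w\<bar> \<le> r" using x y unfolding z_def w_def r_def by (simp_all add: abs_le_iff field_simps)
  have cs: "p * q \<le> r\<^sup>2 - w * z" unfolding p_def q_def using key_cs[OF zr] .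
  have "psi a b y + dpsi a b y * (x - y) = - q + w * (z - w) / q"
    unfolding psi_def dpsi_def q_def pw z_def w_def by simp
  also have "\<dots> = (- (q * q) + w * (z - w)) / q" using q0 by (simp add: field_simps)
  also have "\<dots> \<le> (- (p * q)) / q"
    using q0 cs qq by (intro divide_right_mono) (auto simp: power2_eq_square algebra_simps)
  also have "\<dots> = - p" using q0 by simp
  also have "\<dots> = psi a b x" unfolding psi_def p_def pz ..
  finally show ?thesis .
qed

lemma psi_mid:
  assumes x: "a \<le> x" "x \<le> b" and y: "a \<le> y" "y \<le> b"
  shows "psi a b ((x + y)/2) \<le> (psi a b x + psi a b y)/2 - (x - y)\<^sup>2 / (4 * (b - a))"
proof -
  define r where "r = (b - a)/2"
  define z where "z = x - (a+b)/2"
  define w where "w = y - (a+b)/2"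
  define m where "m = (x + y)/2 - (a+b)/2"
  have m: "m = (z + w)/2" unfolding m_def z_def w_def by (simp add: field_simps)
  have r0: "0 < r" unfolding r_def using ab by simp
  have pz: "(x - a) * (b - x) = r\<^sup>2 - z\<^sup>2" unfolding r_def z_def by (rule prod_eq)
  have pw: "(y - a) * (b - y) = r\<^sup>2 - w\<^sup>2" unfolding r_def w_def by (rule prod_eq)
  have pm: "((x+y)/2 - a) * (b - (x+y)/2) = r\<^sup>2 - m\<^sup>2" unfolding r_def m_def by (rule prod_eq)
  have zr: "\<bar>z\<bar> \<le> r" "\<bar>w\<bar> \<le> r" using x y unfolding z_def w_def r_def by (simp_all add: abs_le_iff field_simps)
  define p where "p = sqrt (r\<^sup>2 - z\<^sup>2)"
  define q where "q = sqrt (r\<^sup>2 - w\<^sup>2)"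
  have p0: "0 \<le> p" "0 \<le> q" unfolding p_def q_def using zr
    by (auto intro!: real_sqrt_ge_zero sq_le)
  have pp: "p\<^sup>2 = r\<^sup>2 - z\<^sup>2" unfolding p_def using sq_le[OF zr(1)] sq_le[OF zr(2)] by simp
  have qq: "q\<^sup>2 = r\<^sup>2 - w\<^sup>2" unfolding q_def using sq_le[OF zr(1)] sq_le[OF zr(2)] by simp
  define A where "A = (p + q)/2"
  define E where "E = ((z - w)\<^sup>2 + (p - q)\<^sup>2)/4"
  have A0: "0 \<le> A" using p0 unfolding A_def by simp
  have E0: "(z - w)\<^sup>2 / 4 \<le> E" unfolding E_def by simp
  have eq: "r\<^sup>2 - m\<^sup>2 = A\<^sup>2 + E"
    unfolding m A_def E_def using pp qq by (simp add: power2_eq_square algebra_simps divide_simps; linarith)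
  define S where "S = sqrt (A\<^sup>2 + E)"
  have Ege: "0 \<le> E" unfolding E_def by simp
  have SS: "S\<^sup>2 = A\<^sup>2 + E" unfolding S_def using add_nonneg_nonneg[OF zero_le_power2[of A] Ege] by simp
  have S0: "0 \<le> S" unfolding S_def using add_nonneg_nonneg[OF zero_le_power2[of A] Ege] by simp
  have Sr: "S \<le> r"
  proof -
    have "A\<^sup>2 + E \<le> r\<^sup>2" using eq zero_le_power2[of m] by linarith
    then have "S \<le> sqrt (r\<^sup>2)" unfolding S_def by (rule real_sqrt_le_mono)
    then show ?thesis using r0 by simp
  qed
  have SA: "A + E / (2 * r) \<le> S"
  proof -
    have "A \<le> S" unfolding S_def using Ege A0
      by (metis le_add_same_cancel1 real_sqrt_abs real_sqrt_le_mono abs_of_nonneg)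
    have prod: "(S - A) * (S + A) = E" using SS by (simp add: power2_eq_square algebra_simps)
    have "E \<le> (S - A) * (2 * r)"
    proof -
      have "(S - A) * (S + A) \<le> (S - A) * (2 * r)"
        using \<open>A \<le> S\<close> Sr A0 by (intro mult_left_mono) auto
      then show ?thesis using prod by simp
    qed
    then have "E / (2 * r) \<le> S - A" using r0 by (simp add: divide_le_eq)
    then show ?thesis by simp
  qed
  have "psi a b ((x + y)/2) = - S" unfolding psi_def pm S_def eq ..
  also have "\<dots> \<le> - A - E / (2 * r)" using SA by simp
  also have "\<dots> \<le> - A - (z - w)\<^sup>2 / (8 * r)"
  proof -
    have "(z - w)\<^sup>2 / (8 * r) = ((z - w)\<^sup>2 / 4) / (2 * r)" by simp
    also have "\<dots> \<le> E / (2 * r)" using E0 r0 by (intro divide_right_mono) auto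
    finally show ?thesis by simp
  qed
  also have "\<dots> = (psi a b x + psi a b y)/2 - (x - y)\<^sup>2 / (4 * (b - a))"
    unfolding psi_def pz pw A_def p_def q_def r_def z_def w_def using ab by (simp add: field_simps power2_eq_square)
  finally show ?thesis .
qed

lemma GG_dpsi:
  assumes "a < x" "x < b"
  shows "GG a b (dpsi a b x) = x"
proof -
  define r where "r = (b - a)/2"
  define z where "z = x - (a+b)/2"
  have pz: "(x - a) * (b - x) = r\<^sup>2 - z\<^sup>2" unfolding r_def z_def by (rule prod_eq)
  have pos: "0 < r\<^sup>2 - z\<^sup>2" using assms pz by (metis mult_pos_pos diff_gt_0_iff_gt)
  have r0: "0 < r" unfolding r_def using ab by simp
  define p where "p = sqrt (r\<^sup>2 - z\<^sup>2)"
  have p0: "0 < p" unfolding p_def using pos by simp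
  have pp: "p\<^sup>2 = r\<^sup>2 - z\<^sup>2" unfolding p_def using pos by simp
  have "1 + (z / p)\<^sup>2 = (r / p)\<^sup>2" using pp p0 by (simp add: field_simps power2_eq_square)
  hence s: "sqrt (1 + (z/p)\<^sup>2) = r / p" using p0 r0 by simp
  have d: "dpsi a b x = z / p" unfolding dpsi_def pz p_def z_def by simp
  have "GG a b (dpsi a b x) = (a+b)/2 + r * ((z/p) / sqrt (1 + (z/p)\<^sup>2))"
    unfolding d GG_def r_def by simp
  also have "\<dots> = (a+b)/2 + r * ((z/p) / (r/p))" unfolding s ..
  also have "\<dots> = x" using p0 r0 unfolding z_def by simp
  finally show ?thesis .
qed

lemma one_sq_ne: "1 + (x::real)\<^sup>2 \<noteq> 0"
  by (smt (verit) zero_le_power2)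

lemma GG_cont: "continuous_on UNIV (GG a b)"
  unfolding GG_def
  by (intro continuous_intros) (auto simp: one_sq_ne)

lemma GG_strict: "a < GG a b y \<and> GG a b y < b"
proof -
  define s where "s = sqrt (1 + y\<^sup>2)"
  define t where "t = y / s"
  have s0: "0 < s" unfolding s_def by (simp add: add_pos_nonneg)
  have "\<bar>y\<bar> < s" unfolding s_def using real_less_rsqrt[of "\<bar>y\<bar>" "1 + y\<^sup>2"] by simp
  hence "- s < y" "y < s" by auto
  hence t1: "- 1 < t" "t < 1" unfolding t_def using s0 by (simp_all add: less_divide_eq divide_less_eq)
  have r0: "0 < (b - a)/2" using ab by simp
  define k where "k = (b - a)/2 * t"
  have "- ((b - a)/2) < k" "k < (b - a)/2"
    using mult_strict_left_mono[OF t1(1) r0] mult_strict_left_mono[OF t1(2) r0] unfolding k_def by auto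
  moreover have "GG a b y = (a + b)/2 + k" unfolding GG_def t_def s_def k_def ..
  ultimately have h: "- ((b - a)/2) < k" "k < (b - a)/2" "GG a b y = (a + b)/2 + k" by auto
  show ?thesis using h by (simp add: field_simps)
qed

lemma psi_cont: "continuous_on S (psi a b)"
  unfolding psi_def by (intro continuous_intros)

end


definition Psi :: "real \<Rightarrow> real \<Rightarrow> nat \<Rightarrow> (nat \<Rightarrow> real) \<Rightarrow> real" where
  "Psi a b n u = (\<Sum>i<n. psi a b (u i)) / real n"
definition Phi :: "real \<Rightarrow> real \<Rightarrow> nat \<Rightarrow> ((nat \<Rightarrow> real) \<Rightarrow> real) \<Rightarrow> (nat \<Rightarrow> real) \<Rightarrow> real \<Rightarrow> (nat \<Rightarrow> real) \<Rightarrow> real" where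
  "Phi a b n N f lam u = lam * N (\<lambda>i. f i - u i) + Psi a b n u"
definition Box :: "real \<Rightarrow> real \<Rightarrow> nat \<Rightarrow> (nat \<Rightarrow> real) set" where
  "Box a b n = {u. u \<in> vecs n \<and> (\<forall>i<n. a \<le> u i \<and> u i \<le> b)}"

lemma Box_PiE: "Box a b n = PiE UNIV (\<lambda>i. if i < n then {a..b} else {0})"
  by (auto simp: Box_def vecs_def PiE_iff split: if_splits)

lemma compact_Box: "compact (Box a b n)"
proof -
  have "compactin (product_topology (\<lambda>_. euclidean) UNIV) (PiE UNIV (\<lambda>i. if i < n then {a..b} else {0::real}))"
    by (subst compactin_PiE) auto
  then show ?thesis unfolding Box_PiE euclidean_product_topology by simp
qed

lemma coord_cont[continuous_intros]: "continuous_on S (\<lambda>u::nat\<Rightarrow>real. u i)"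
  by (rule continuous_on_subset[OF continuous_on_product_coordinates subset_UNIV])

lemma N_cont:
  assumes N: "is_norm_on n N" and f: "f \<in> vecs n"
  shows "continuous_on (vecs n) (\<lambda>u. N (\<lambda>i. f i - u i))"
  unfolding continuous_on_def
proof
  fix x assume x: "x \<in> vecs n"
  define h where "h = (\<lambda>u. N (\<lambda>i. f i - u i))"
  define g where "g = (\<lambda>u::nat\<Rightarrow>real. \<Sum>i<n. \<bar>u i - x i\<bar> * N (evec i))"
  have gc: "continuous_on UNIV g" unfolding g_def by (intro continuous_intros)
  have "(g \<longlongrightarrow> g x) (at x within vecs n)"
  proof -
    have "(g \<longlongrightarrow> g x) (at x within UNIV)" using gc by (simp add: continuous_on_def)
    from tendsto_within_subset[OF this subset_UNIV] show ?thesis .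
  qed
  moreover have "g x = 0" unfolding g_def by simp
  ultimately have g0: "(g \<longlongrightarrow> 0) (at x within vecs n)" by simp
  have bound: "norm (h u - h x) \<le> g u" if u: "u \<in> vecs n" for u
  proof -
    have fu: "(\<lambda>i. f i - u i) \<in> vecs n" and fx: "(\<lambda>i. f i - x i) \<in> vecs n"
      and xu: "(\<lambda>i. x i - u i) \<in> vecs n" and ux: "(\<lambda>i. u i - x i) \<in> vecs n"
      using f x u by auto
    have "h u \<le> h x + N (\<lambda>i. x i - u i)"
      using P_tri[OF N fx xu] unfolding h_def by simp
    moreover have "h x \<le> h u + N (\<lambda>i. u i - x i)"
      using P_tri[OF N fu ux] unfolding h_def by simp
    moreover have "N (\<lambda>i. x i - u i) = N (\<lambda>i. u i - x i)"
      using P_neg[OF N ux] by simp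
    moreover have "N (\<lambda>i. u i - x i) \<le> g u"
      using P_coord_bound[OF N ux] unfolding g_def by simp
    ultimately show ?thesis by auto
  qed
  have "((\<lambda>u. h u - h x) \<longlongrightarrow> 0) (at x within vecs n)"
  proof (rule Lim_null_comparison[OF _ g0])
    show "\<forall>\<^sub>F u in at x within vecs n. norm (h u - h x) \<le> g u"
      unfolding eventually_at_filter by (rule always_eventually) (use bound in auto)
  qed
  then show "(h \<longlongrightarrow> h x) (at x within vecs n)" by (rule LIM_zero_cancel)
qed

lemma Psi_cont: "continuous_on S (Psi a b n)"
proof -
  have c: "continuous_on S (\<lambda>u. \<Sum>i<n. psi a b (u i))" unfolding psi_def by (intro continuous_intros)
  have "Psi a b n = (\<lambda>u. (\<Sum>i<n. psi a b (u i)) * (1 / real n))" by (auto simp: Psi_def fun_eq_iff)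
  then show ?thesis using continuous_on_mult_right[OF c, of "1 / real n"] by metis
qed

lemma Box_vecs: "Box a b n \<subseteq> vecs n" by (auto simp: Box_def)

lemma exists_min:
  assumes "a \<le> b" "is_norm_on n N" "f \<in> vecs n"
  shows "\<exists>u\<in>Box a b n. \<forall>w\<in>Box a b n. Phi a b n N f lam u \<le> Phi a b n N f lam w"
proof (rule continuous_attains_inf[OF compact_Box])
  have "(\<lambda>i. if i < n then a else 0) \<in> Box a b n" using assms by (auto simp: Box_def vecs_def)
  then show "Box a b n \<noteq> {}" by blast
  have "continuous_on (Box a b n) (\<lambda>u. N (\<lambda>i. f i - u i))"
    using continuous_on_subset[OF N_cont[OF assms(2,3)] Box_vecs] .
  then show "continuous_on (Box a b n) (Phi a b n N f lam)"
    unfolding Phi_def[abs_def] by (intro continuous_intros Psi_cont)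
qed


definition gvec :: "real \<Rightarrow> real \<Rightarrow> nat \<Rightarrow> (nat \<Rightarrow> real) \<Rightarrow> nat \<Rightarrow> real" where
  "gvec a b n u = (\<lambda>j. if j < n then dpsi a b (u j) else 0)"

lemma dpsi_isCont: "a < y \<Longrightarrow> y < b \<Longrightarrow> isCont (dpsi a b) y"
  unfolding dpsi_def by (intro continuous_intros) auto

lemma sqrt_contra:
  fixes a b K t :: real
  assumes ab: "a < b" and K: "0 \<le> K" and t: "t = (b - a) / (2 * (K\<^sup>2 + 1))"
    and le: "sqrt (t * (b - a - t)) \<le> K * t"
  shows False
proof -
  have K1: "1 \<le> K\<^sup>2 + 1" by simp
  have den: "0 < 2 * (K\<^sup>2 + 1)" by (smt (verit) zero_le_power2)
  have den4: "0 < 4 * K\<^sup>2 + 4" by (smt (verit) zero_le_power2)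
  have t0: "0 < t" unfolding t using ab den by (intro divide_pos_pos) auto
  have th: "t \<le> (b - a)/2"
  proof -
    have "(b - a) / (2 * (K\<^sup>2 + 1)) \<le> (b - a) / (2 * 1)"
      using ab K1 den4 by (intro divide_left_mono) auto
    then show ?thesis unfolding t by simp
  qed
  have p0: "0 \<le> t * (b - a - t)" using t0 th by simp
  have "t * (b - a - t) \<le> (K * t)\<^sup>2"
  proof -
    have "sqrt (t * (b - a - t)) ^ 2 \<le> (K * t)\<^sup>2"
      using le K t0 p0 by (intro power_mono) auto
    then show ?thesis using p0 by simp
  qed
  hence "t * (b - a - t) \<le> t * (K\<^sup>2 * t)" by (simp add: power2_eq_square algebra_simps)
  hence h1: "b - a - t \<le> K\<^sup>2 * t" using t0 by simp
  have "K\<^sup>2 * t = (b - a)/2 * (K\<^sup>2 / (K\<^sup>2 + 1))" unfolding t by (simp add: field_simps)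
  also have "\<dots> < (b - a)/2 * 1"
  proof (rule mult_strict_left_mono)
    have "0 < K\<^sup>2 + 1" by (smt (verit) zero_le_power2)
    then show "K\<^sup>2 / (K\<^sup>2 + 1) < 1" by (simp add: divide_less_eq)
  qed (use ab in simp)
  finally have "K\<^sup>2 * t < (b - a)/2" by simp
  with h1 th show False unfolding diff_divide_distrib by linarith
qed

locale dsetup =
  fixes a b :: real and n :: nat and N :: "(nat \<Rightarrow> real) \<Rightarrow> real" and f :: "nat \<Rightarrow> real"
  assumes ab: "a < b" and n0: "0 < n" and N: "is_norm_on n N" and f: "f \<in> vecs n"
    and fb: "\<forall>i<n. a \<le> f i \<and> f i \<le> b"
begin

definition opt where
  "opt lam u \<longleftrightarrow> u \<in> Box a b n \<and> (\<forall>w\<in>Box a b n. Phi a b n N f lam u \<le> Phi a b n N f lam w)"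

lemma opt_exists: "\<exists>u. opt lam u"
  using exists_min[OF less_imp_le[OF ab] N f] unfolding opt_def by blast

lemma f_Box: "f \<in> Box a b n" using f fb by (simp add: Box_def)

lemma opt_dir:
  assumes lam: "0 \<le> lam" and u: "opt lam u" and d: "d \<in> vecs n" and w: "(\<lambda>i. u i + d i) \<in> Box a b n"
  shows "Psi a b n u - Psi a b n (\<lambda>i. u i + d i) \<le> lam * N d"
proof -
  have uv: "u \<in> vecs n" using u by (auto simp: opt_def Box_def)
  have fu: "(\<lambda>i. f i - u i) \<in> vecs n" using f uv by auto
  have "Phi a b n N f lam u \<le> Phi a b n N f lam (\<lambda>i. u i + d i)" using u w by (auto simp: opt_def)
  hence h: "lam * N (\<lambda>i. f i - u i) + Psi a b n u \<le> lam * N (\<lambda>i. f i - (u i + d i)) + Psi a b n (\<lambda>i. u i + d i)"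
    by (simp add: Phi_def)
  have "N (\<lambda>i. f i - (u i + d i)) = N (\<lambda>i. (f i - u i) - d i)" by (simp add: algebra_simps)
  also have "\<dots> \<le> N (\<lambda>i. f i - u i) + N d" using P_diff[OF N fu d] by simp
  finally have h2: "N (\<lambda>i. f i - (u i + d i)) \<le> N (\<lambda>i. f i - u i) + N d" .
  have "lam * N (\<lambda>i. f i - (u i + d i)) \<le> lam * (N (\<lambda>i. f i - u i) + N d)"
    using mult_left_mono[OF h2 lam] .
  with h show ?thesis by (simp add: algebra_simps)
qed

lemma Psi_coord:
  assumes i: "i < n"
  shows "Psi a b n (\<lambda>j. u j + t * evec i j) = Psi a b n u + (psi a b (u i + t) - psi a b (u i)) / real n"
proof -
  have "(\<Sum>j<n. psi a b (u j + t * evec i j)) = (\<Sum>j<n. psi a b (u j) + (if j = i then psi a b (u i + t) - psi a b (u i) else 0))"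
    by (intro sum.cong) (auto simp: evec_def)
  also have "\<dots> = (\<Sum>j<n. psi a b (u j)) + (psi a b (u i + t) - psi a b (u i))"
    using i by (simp add: sum.distrib)
  finally show ?thesis unfolding Psi_def by (simp add: add_divide_distrib)
qed

lemma opt_interior:
  assumes lam: "0 \<le> lam" and u: "opt lam u" and i: "i < n"
  shows "a < u i \<and> u i < b"
proof -
  have uB: "u \<in> Box a b n" using u by (simp add: opt_def)
  hence ui: "a \<le> u i" "u i \<le> b" and uv: "u \<in> vecs n" using i by (auto simp: Box_def)
  define K where "K = real n * lam * N (evec i)"
  have Npos: "0 < N (evec i)" using P_evec_pos[OF N i] .
  have K0: "0 \<le> K" unfolding K_def using lam Npos by simp
  define t where "t = (b - a) / (2 * (K\<^sup>2 + 1))"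
  have den: "0 < 2 * (K\<^sup>2 + 1)" by (smt (verit) zero_le_power2)
  have den4: "0 < 4 * K\<^sup>2 + 4" by (smt (verit) zero_le_power2)
  have t0: "0 < t" unfolding t_def using ab den by (intro divide_pos_pos) auto
  have th: "t \<le> (b - a)/2"
  proof -
    have "(b - a) / (2 * (K\<^sup>2 + 1)) \<le> (b - a) / (2 * 1)"
      using ab den4 by (intro divide_left_mono) auto
    then show ?thesis unfolding t_def by simp
  qed
  have n0': "0 < real n" using n0 by simp
  have key: "sqrt (t * (b - a - t)) \<le> K * t"
    if s: "s = t \<or> s = - t" and val: "psi a b (u i) - psi a b (u i + s) = sqrt (t * (b - a - t))"
      and inb: "a \<le> u i + s \<and> u i + s \<le> b" for s
  proof -
    define d where "d = (\<lambda>j. s * evec i j)"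
    have dv: "d \<in> vecs n" unfolding d_def using i by auto
    have wB: "(\<lambda>j. u j + d j) \<in> Box a b n"
      using uB inb i dv unfolding d_def by (auto simp: Box_def evec_def vecs_def)
    have "Psi a b n u - Psi a b n (\<lambda>j. u j + d j) \<le> lam * N d"
      by (rule opt_dir[OF lam u dv wB])
    moreover have "Psi a b n (\<lambda>j. u j + d j) = Psi a b n u + (psi a b (u i + s) - psi a b (u i)) / real n"
      unfolding d_def by (rule Psi_coord[OF i])
    moreover have "N d = t * N (evec i)"
      unfolding d_def using P_hom[OF N vecs_evec[OF i], of s] s t0 by auto
    ultimately have "(psi a b (u i) - psi a b (u i + s)) / real n \<le> lam * (t * N (evec i))"
      by (simp add: diff_divide_distrib)
    hence "sqrt (t * (b - a - t)) / real n \<le> lam * (t * N (evec i))" using val by simp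
    hence "sqrt (t * (b - a - t)) \<le> real n * (lam * (t * N (evec i)))"
      using n0' by (simp add: divide_le_eq mult.commute)
    then show ?thesis unfolding K_def by (simp add: algebra_simps)
  qed
  have "a < u i"
  proof (rule ccontr)
    assume "\<not> a < u i"
    hence ua: "u i = a" using ui by simp
    have "sqrt (t * (b - a - t)) \<le> K * t"
    proof (rule key[of t])
      show "psi a b (u i) - psi a b (u i + t) = sqrt (t * (b - a - t))"
        unfolding ua psi_def by simp
      show "a \<le> u i + t \<and> u i + t \<le> b" using ua t0 th ab by simp
    qed simp
    then show False using sqrt_contra[OF ab K0 t_def] by simp
  qed
  moreover have "u i < b"
  proof (rule ccontr)
    assume "\<not> u i < b"
    hence ub: "u i = b" using ui by simp
    have "sqrt (t * (b - a - t)) \<le> K * t"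
    proof (rule key[of "- t"])
      show "psi a b (u i) - psi a b (u i + - t) = sqrt (t * (b - a - t))"
        unfolding ub psi_def by (simp add: algebra_simps)
      show "a \<le> u i + - t \<and> u i + - t \<le> b" using ub t0 th ab by simp
    qed simp
    then show False using sqrt_contra[OF ab K0 t_def] by simp
  qed
  ultimately show ?thesis by simp
qed

end


context dsetup
begin

lemma opt_Box: "opt lam u \<Longrightarrow> u \<in> Box a b n" by (simp add: opt_def)
lemma opt_vecs: "opt lam u \<Longrightarrow> u \<in> vecs n" by (simp add: opt_def Box_def)

lemma grad_lower:
  assumes lam: "0 \<le> lam" and u: "opt lam u" and d: "d \<in> vecs n"
  shows "- (lam * N d) \<le> ip n d (gvec a b n u)"
proof -
  have int: "a < u j \<and> u j < b" if "j < n" for j using opt_interior[OF lam u that] .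
  have uv: "u \<in> vecs n" using opt_vecs[OF u] .
  define S where "S t = (\<Sum>j<n. dpsi a b (u j + t * d j) * d j) / real n" for t
  have lim: "(S \<longlongrightarrow> S 0) (at_right 0)"
  proof -
    have "((\<lambda>t. (\<Sum>j<n. dpsi a b (u j + t * d j) * d j) / real n) \<longlongrightarrow>
          (\<Sum>j<n. dpsi a b (u j + 0 * d j) * d j) / real n) (at_right 0)"
    proof (intro tendsto_divide tendsto_const tendsto_sum tendsto_mult)
      fix j assume "j \<in> {..<n}"
      hence j: "a < u j + 0 * d j" "u j + 0 * d j < b" using int by auto
      have "((\<lambda>t. u j + t * d j) \<longlongrightarrow> u j + 0 * d j) (at_right 0)"
        by (intro tendsto_intros)
      then show "((\<lambda>t. dpsi a b (u j + t * d j)) \<longlongrightarrow> dpsi a b (u j + 0 * d j)) (at_right 0)"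
        by (rule isCont_tendsto_compose[OF dpsi_isCont[OF j]])
    qed (use n0 in auto)
    then show ?thesis unfolding S_def by simp
  qed
  have ev: "\<forall>\<^sub>F t in at_right 0. 0 < t \<and> (\<forall>j\<in>{..<n}. a < u j + t * d j \<and> u j + t * d j < b)"
  proof (rule eventually_conj)
    show "\<forall>\<^sub>F t in at_right 0. (0::real) < t" by (rule eventually_at_right_less)
    show "\<forall>\<^sub>F t in at_right 0. \<forall>j\<in>{..<n}. a < u j + t * d j \<and> u j + t * d j < b"
    proof (rule eventually_ball_finite)
      show "finite {..<n}" by simp
      show "\<forall>j\<in>{..<n}. \<forall>\<^sub>F t in at_right 0. a < u j + t * d j \<and> u j + t * d j < b"
      proof
        fix j assume "j \<in> {..<n}"
        hence j: "a < u j" "u j < b" using int by auto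
        have t: "((\<lambda>t. u j + t * d j) \<longlongrightarrow> u j) (at_right 0)"
        proof -
          have "((\<lambda>t. u j + t * d j) \<longlongrightarrow> u j + 0 * d j) (at_right 0)" by (intro tendsto_intros)
          then show ?thesis by simp
        qed
        show "\<forall>\<^sub>F t in at_right 0. a < u j + t * d j \<and> u j + t * d j < b"
          using order_tendstoD(1)[OF t j(1)] order_tendstoD(2)[OF t j(2)] by (rule eventually_conj)
      qed
    qed
  qed
  have bound: "- (lam * N d) \<le> S t"
    if t0: "0 < t" and inb: "\<forall>j\<in>{..<n}. a < u j + t * d j \<and> u j + t * d j < b" for t
  proof -
    define td where "td = (\<lambda>j. t * d j)"
    have tdv: "td \<in> vecs n" unfolding td_def using d by auto
    have wB: "(\<lambda>j. u j + td j) \<in> Box a b n"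
      using inb uv d unfolding td_def by (auto simp: Box_def vecs_def less_imp_le)
    have "Psi a b n u - Psi a b n (\<lambda>j. u j + td j) \<le> lam * N td"
      by (rule opt_dir[OF lam u tdv wB])
    also have "N td = t * N d" unfolding td_def using P_hom[OF N d, of t] t0 by simp
    finally have h1: "Psi a b n u - Psi a b n (\<lambda>j. u j + td j) \<le> lam * (t * N d)" .
    have tang: "- (t * (dpsi a b (u j + t * d j) * d j)) \<le> psi a b (u j) - psi a b (u j + t * d j)"
      if j: "j < n" for j
    proof -
      have "psi a b (u j + t * d j) + dpsi a b (u j + t * d j) * (u j - (u j + t * d j)) \<le> psi a b (u j)"
        using psi_tangent[OF ab, of "u j" "u j + t * d j"] int[OF j] inb j by auto
      then show ?thesis by (simp add: algebra_simps)
    qed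
    have "(\<Sum>j<n. - (t * (dpsi a b (u j + t * d j) * d j))) \<le> (\<Sum>j<n. psi a b (u j) - psi a b (u j + t * d j))"
      by (rule sum_mono) (use tang in auto)
    hence "- (t * (\<Sum>j<n. dpsi a b (u j + t * d j) * d j)) \<le> (\<Sum>j<n. psi a b (u j)) - (\<Sum>j<n. psi a b (u j + t * d j))"
      by (simp add: sum_subtractf sum_distrib_left sum_negf)
    hence "- (t * (\<Sum>j<n. dpsi a b (u j + t * d j) * d j)) / real n \<le> ((\<Sum>j<n. psi a b (u j)) - (\<Sum>j<n. psi a b (u j + t * d j))) / real n"
      using n0 by (intro divide_right_mono) auto
    hence "- (t * S t) \<le> Psi a b n u - Psi a b n (\<lambda>j. u j + td j)"
      unfolding S_def Psi_def td_def by (simp add: diff_divide_distrib)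
    with h1 have "- (t * S t) \<le> t * (lam * N d)" by (simp add: algebra_simps)
    hence "t * (- (lam * N d)) \<le> t * S t" by (simp add: algebra_simps)
    from this t0 show ?thesis by (rule mult_left_le_imp_le)
  qed
  have "- (lam * N d) \<le> S 0"
    by (rule tendsto_lowerbound[OF lim]) (use eventually_mono[OF ev] bound in \<open>auto simp: trivial_limit_at_right_real\<close>)
  also have "S 0 = ip n d (gvec a b n u)"
    unfolding S_def ip_def gvec_def by (simp add: mult.commute)
  finally show ?thesis .
qed

lemma grad_upper:
  assumes lam: "0 \<le> lam" and u: "opt lam u" and d: "d \<in> vecs n"
  shows "ip n d (gvec a b n u) \<le> lam * N d"
proof -
  have "- (lam * N (\<lambda>i. - d i)) \<le> ip n (\<lambda>i. - d i) (gvec a b n u)"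
    using grad_lower[OF lam u] d by auto
  moreover have "N (\<lambda>i. - d i) = N d" using P_neg[OF N d] .
  moreover have "ip n (\<lambda>i. - d i) (gvec a b n u) = - ip n d (gvec a b n u)"
    unfolding ip_def by (simp add: sum_negf)
  ultimately show ?thesis by simp
qed

lemma M_le:
  assumes lam: "0 \<le> lam" and u: "opt lam u"
  shows "dual_norm n N (gvec a b n u) \<le> lam"
  unfolding dual_norm_def
proof (rule cSup_least)
  have "ip n (\<lambda>_. 0) (gvec a b n u) \<in> {ip n f (gvec a b n u) |f. f \<in> vecs n \<and> N f \<le> 1}"
    using P_zero[OF N] by auto
  then show "{ip n f (gvec a b n u) |f. f \<in> vecs n \<and> N f \<le> 1} \<noteq> {}" by blast
next
  fix x assume "x \<in> {ip n f (gvec a b n u) |f. f \<in> vecs n \<and> N f \<le> 1}"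
  then obtain d where d: "d \<in> vecs n" "N d \<le> 1" and x: "x = ip n d (gvec a b n u)" by blast
  have "x \<le> lam * N d" using grad_upper[OF lam u d(1)] x by simp
  also have "\<dots> \<le> lam * 1" using d(2) lam by (intro mult_left_mono) auto
  finally show "x \<le> lam" by simp
qed

lemma gvec_vecs: "gvec a b n u \<in> vecs n" by (simp add: gvec_def vecs_def)

lemma GG_gvec:
  assumes lam: "0 \<le> lam" and u: "opt lam u" and j: "j < n"
  shows "GG a b (gvec a b n u j) = u j"
  using GG_dpsi[OF ab] opt_interior[OF lam u j] j by (simp add: gvec_def)

lemma Psi_bounds:
  assumes "u \<in> Box a b n"
  shows "- ((b - a)/2) \<le> Psi a b n u \<and> Psi a b n u \<le> 0"
proof -
  have r: "- ((b - a)/2) \<le> psi a b (u j) \<and> psi a b (u j) \<le> 0" if "j < n" for j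
    using psi_range[OF ab] assms that by (auto simp: Box_def)
  have "(\<Sum>j<n. - ((b - a)/2)) \<le> (\<Sum>j<n. psi a b (u j))" by (rule sum_mono) (use r in auto)
  hence l: "real n * (- ((b - a)/2)) \<le> (\<Sum>j<n. psi a b (u j))" by simp
  have "(\<Sum>j<n. psi a b (u j)) \<le> (\<Sum>j<n. 0)" by (rule sum_mono) (use r in auto)
  hence h: "(\<Sum>j<n. psi a b (u j)) \<le> 0" by simp
  have n': "0 < real n" using n0 by simp
  from l n' have "- ((b - a)/2) \<le> (\<Sum>j<n. psi a b (u j)) / real n"
    by (simp add: le_divide_eq mult.commute)
  moreover from h n' have "(\<Sum>j<n. psi a b (u j)) / real n \<le> 0" by (simp add: divide_le_0_iff)
  ultimately show ?thesis unfolding Psi_def by simp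
qed

lemma N_small:
  assumes lam: "0 < lam" and u: "opt lam u"
  shows "N (\<lambda>i. f i - u i) \<le> (b - a) / 2 / lam"
proof -
  have "Phi a b n N f lam u \<le> Phi a b n N f lam f" using u f_Box by (simp add: opt_def)
  hence "lam * N (\<lambda>i. f i - u i) + Psi a b n u \<le> lam * N (\<lambda>_. 0) + Psi a b n f"
    by (simp add: Phi_def)
  hence "lam * N (\<lambda>i. f i - u i) \<le> Psi a b n f - Psi a b n u" using P_zero[OF N] by simp
  also have "\<dots> \<le> (b - a)/2"
  proof -
    have A: "Psi a b n f \<le> 0" and B: "- ((b - a)/2) \<le> Psi a b n u"
      using Psi_bounds[OF f_Box] Psi_bounds[OF opt_Box[OF u]] by auto
    then show ?thesis unfolding diff_divide_distrib by linarith
  qed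
  finally have "lam * N (\<lambda>i. f i - u i) \<le> (b - a)/2" .
  then show ?thesis using lam by (simp add: le_divide_eq mult.commute)
qed

lemma pair:
  assumes lam: "0 \<le> lam" and lm: "lam < mu" and u: "opt lam u" and w: "opt mu w"
  shows "(\<Sum>j<n. (w j - u j)\<^sup>2) / real n \<le> 2 * (b - a) * (Psi a b n w - Psi a b n u)"
proof -
  have uB: "u \<in> Box a b n" and wB: "w \<in> Box a b n" using u w by (simp_all add: opt_def)
  have uv: "u \<in> vecs n" and wv: "w \<in> vecs n" using uB wB by (auto simp: Box_def)
  define m where "m = (\<lambda>j. (u j + w j) / 2)"
  have mB: "m \<in> Box a b n"
  proof -
    have "m \<in> vecs n" using uv wv by (simp add: m_def vecs_def)
    moreover have "a \<le> m i \<and> m i \<le> b" if i: "i < n" for i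
    proof -
      have "a \<le> u i" "u i \<le> b" "a \<le> w i" "w i \<le> b" using uB wB i by (auto simp: Box_def)
      then show ?thesis by (simp add: m_def field_simps)
    qed
    ultimately show ?thesis by (simp add: Box_def)
  qed
  define Q where "Q = (\<Sum>j<n. (w j - u j)\<^sup>2) / real n"
  have n': "0 < real n" using n0 by simp
  have ba: "0 < b - a" using ab by simp
  have pm: "psi a b (m j) \<le> (psi a b (u j) + psi a b (w j))/2 - (w j - u j)\<^sup>2 / (4 * (b - a))"
    if j: "j < n" for j
  proof -
    have "psi a b ((u j + w j)/2) \<le> (psi a b (u j) + psi a b (w j))/2 - (u j - w j)\<^sup>2 / (4 * (b - a))"
      using psi_mid[OF ab, of "u j" "w j"] uB wB j by (auto simp: Box_def)
    moreover have "(u j - w j)\<^sup>2 = (w j - u j)\<^sup>2" by (simp add: power2_commute)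
    ultimately show ?thesis unfolding m_def by simp
  qed
  have "(\<Sum>j<n. psi a b (m j)) \<le> (\<Sum>j<n. (psi a b (u j) + psi a b (w j))/2 - (w j - u j)\<^sup>2 / (4 * (b - a)))"
    by (rule sum_mono) (use pm in auto)
  also have "\<dots> = ((\<Sum>j<n. psi a b (u j)) + (\<Sum>j<n. psi a b (w j)))/2 - (\<Sum>j<n. (w j - u j)\<^sup>2) / (4 * (b - a))"
    by (simp add: sum_subtractf sum_divide_distrib[symmetric] sum.distrib)
  finally have "(\<Sum>j<n. psi a b (m j)) / real n \<le> (((\<Sum>j<n. psi a b (u j)) + (\<Sum>j<n. psi a b (w j)))/2 - (\<Sum>j<n. (w j - u j)\<^sup>2) / (4 * (b - a))) / real n"
    using n' by (intro divide_right_mono) auto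
  hence psim: "Psi a b n m \<le> (Psi a b n u + Psi a b n w)/2 - Q / (4 * (b - a))"
    unfolding Psi_def Q_def by (simp add: diff_divide_distrib add_divide_distrib mult_ac)
  have fu: "(\<lambda>j. f j - u j) \<in> vecs n" and fw: "(\<lambda>j. f j - w j) \<in> vecs n" using f uv wv by auto
  have "N (\<lambda>j. f j - m j) = N (\<lambda>j. (1/2) * (f j - u j) + (1/2) * (f j - w j))"
    unfolding m_def by (rule arg_cong[where f=N]) (auto simp: fun_eq_iff field_simps)
  also have "\<dots> \<le> (1/2) * N (\<lambda>j. f j - u j) + (1/2) * N (\<lambda>j. f j - w j)"
    by (rule P_convex[OF N fu fw]) auto
  finally have nm: "N (\<lambda>j. f j - m j) \<le> (1/2) * N (\<lambda>j. f j - u j) + (1/2) * N (\<lambda>j. f j - w j)" .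
  have "lam * N (\<lambda>j. f j - m j) \<le> lam * ((1/2) * N (\<lambda>j. f j - u j) + (1/2) * N (\<lambda>j. f j - w j))"
    using mult_left_mono[OF nm lam] .
  with psim have phim: "Phi a b n N f lam m \<le> (Phi a b n N f lam u + Phi a b n N f lam w)/2 - Q / (4 * (b - a))"
    unfolding Phi_def by (simp add: algebra_simps add_divide_distrib)
  have "Phi a b n N f lam u \<le> Phi a b n N f lam m" using u mB by (simp add: opt_def)
  moreover note phim
  moreover define R where "R = Q / (4 * (b - a))"
  ultimately have "R \<le> Phi a b n N f lam w / 2 - Phi a b n N f lam u / 2"
    by (simp add: add_divide_distrib)
  hence "R * (4 * (b - a)) \<le> (Phi a b n N f lam w / 2 - Phi a b n N f lam u / 2) * (4 * (b - a))"
    using ba by (intro mult_right_mono) auto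
  moreover have "R * (4 * (b - a)) = Q" unfolding R_def using ba by simp
  ultimately have Qle: "Q \<le> 2 * (b - a) * (Phi a b n N f lam w - Phi a b n N f lam u)"
    by (simp add: algebra_simps)
  have o1: "Phi a b n N f lam u \<le> Phi a b n N f lam w" using u wB by (simp add: opt_def)
  have o2: "Phi a b n N f mu w \<le> Phi a b n N f mu u" using w uB by (simp add: opt_def)
  have "(mu - lam) * N (\<lambda>j. f j - w j) \<le> (mu - lam) * N (\<lambda>j. f j - u j)"
    using o1 o2 unfolding Phi_def by (simp add: algebra_simps)
  hence Nle: "N (\<lambda>j. f j - w j) \<le> N (\<lambda>j. f j - u j)" using lm by simp
  have "Phi a b n N f lam w - Phi a b n N f lam u \<le> Psi a b n w - Psi a b n u"
    using mult_left_mono[OF Nle lam] unfolding Phi_def by simp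
  with Qle ba have "Q \<le> 2 * (b - a) * (Psi a b n w - Psi a b n u)"
    by (smt (verit) mult_left_mono)
  then show ?thesis unfolding Q_def .
qed

end


lemma poly_approx:
  fixes a b L \<delta> :: real
  assumes ab: "a < b" and L: "0 \<le> L" and d: "0 < \<delta>"
  shows "\<exists>q k. \<forall>y. \<bar>y\<bar> \<le> L \<longrightarrow> \<bar>(\<Sum>i\<le>k. q i * y ^ i) - GG a b y\<bar> \<le> \<delta> \<and>
           a \<le> (\<Sum>i\<le>k. q i * y ^ i) \<and> (\<Sum>i\<le>k. q i * y ^ i) \<le> b"
proof -
  define S where "S = {-L..L}"
  have cS: "compact S" and neS: "S \<noteq> {}" unfolding S_def using L by auto
  have cont: "continuous_on S (GG a b)" using continuous_on_subset[OF GG_cont[OF ab]] by simp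
  obtain y1 where y1: "y1 \<in> S" "\<forall>y\<in>S. GG a b y1 \<le> GG a b y"
    using continuous_attains_inf[OF cS neS cont] by blast
  obtain y2 where y2: "y2 \<in> S" "\<forall>y\<in>S. GG a b y \<le> GG a b y2"
    using continuous_attains_sup[OF cS neS cont] by blast
  define e where "e = min \<delta> (min (GG a b y1 - a) (b - GG a b y2))"
  have e0: "0 < e" unfolding e_def using d GG_strict[OF ab, of y1] GG_strict[OF ab, of y2] by simp
  obtain g where g: "real_polynomial_function g" "\<And>x. x \<in> S \<Longrightarrow> \<bar>GG a b x - g x\<bar> < e"
    using Stone_Weierstrass_real_polynomial_function[OF cS cont e0] by blast
  obtain q k where gq: "g = (\<lambda>x. \<Sum>i\<le>k. q i * x ^ i)"
    using g(1) unfolding real_polynomial_function_iff_sum by blast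
  show ?thesis
  proof (intro exI allI impI)
    fix y :: real assume y: "\<bar>y\<bar> \<le> L"
    hence yS: "y \<in> S" unfolding S_def by auto
    have ge: "\<bar>GG a b y - g y\<bar> < e" using g(2)[OF yS] .
    have "e \<le> \<delta>" "e \<le> GG a b y1 - a" "e \<le> b - GG a b y2" unfolding e_def by auto
    moreover have "GG a b y1 \<le> GG a b y" "GG a b y \<le> GG a b y2" using y1 y2 yS by auto
    ultimately show "\<bar>(\<Sum>i\<le>k. q i * y ^ i) - GG a b y\<bar> \<le> \<delta> \<and>
           a \<le> (\<Sum>i\<le>k. q i * y ^ i) \<and> (\<Sum>i\<le>k. q i * y ^ i) \<le> b"
      using ge unfolding gq by auto
  qed
qed

definition pw :: "nat \<Rightarrow> (nat \<Rightarrow> real) \<Rightarrow> nat \<Rightarrow> nat \<Rightarrow> real" where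
  "pw n g i = (\<lambda>j. if j < n then g j ^ i else 0)"
definition pvec :: "nat \<Rightarrow> (nat \<Rightarrow> real) \<Rightarrow> nat \<Rightarrow> (nat \<Rightarrow> real) \<Rightarrow> nat \<Rightarrow> real" where
  "pvec n q k g = (\<lambda>j. \<Sum>i\<le>k. q i * pw n g i j)"

lemma pw_vecs: "pw n g i \<in> vecs n" by (simp add: pw_def vecs_def)
lemma pvec_vecs: "pvec n q k g \<in> vecs n" by (simp add: pvec_def pw_def vecs_def)
lemma pvec_val: "j < n \<Longrightarrow> pvec n q k g j = (\<Sum>i\<le>k. q i * g j ^ i)"
  by (simp add: pvec_def pw_def)
lemma pw0: "pw n g 0 = one_vec n" by (simp add: pw_def Defs.one_vec_def fun_eq_iff)
lemma pwS: "g \<in> vecs n \<Longrightarrow> pw n g (Suc i) = pmult g (pw n g i)"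
  by (auto simp: pw_def pmult_def vecs_def fun_eq_iff)

context
  fixes n :: nat and M :: "(nat \<Rightarrow> real) \<Rightarrow> real"
  assumes M: "is_algebra_norm_on n M"
begin

lemma Mn: "is_norm_on n M" using M by (simp add: is_algebra_norm_on_def)
lemma M_mult: "f \<in> vecs n \<Longrightarrow> g \<in> vecs n \<Longrightarrow> M (pmult f g) \<le> M f * M g"
  using M by (simp add: is_algebra_norm_on_def)
lemma M_one: "M (one_vec n) = 1"
  using M by (simp add: is_algebra_norm_on_def)

lemma M_pw: "g \<in> vecs n \<Longrightarrow> M (pw n g i) \<le> M g ^ i"
proof (induction i)
  case 0 then show ?case by (simp add: pw0 M_one)
next
  case (Suc i)
  have "M (pw n g (Suc i)) = M (pmult g (pw n g i))" using pwS[OF Suc.prems] by simp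
  also have "\<dots> \<le> M g * M (pw n g i)" using M_mult[OF Suc.prems pw_vecs] .
  also have "\<dots> \<le> M g * M g ^ i"
    using Suc P_nonneg[OF Mn Suc.prems] by (intro mult_left_mono) auto
  finally show ?case by simp
qed

lemma M_pvec:
  assumes g: "g \<in> vecs n"
  shows "M (pvec n q k g) \<le> (\<Sum>i\<le>k. \<bar>q i\<bar> * M g ^ i)"
proof -
  have "M (pvec n q k g) \<le> (\<Sum>i\<le>k. M (\<lambda>j. q i * pw n g i j))"
    unfolding pvec_def by (rule P_sum[OF Mn]) (auto intro: pw_vecs)
  also have "\<dots> = (\<Sum>i\<le>k. \<bar>q i\<bar> * M (pw n g i))"
    by (intro sum.cong refl P_hom[OF Mn] pw_vecs)
  also have "\<dots> \<le> (\<Sum>i\<le>k. \<bar>q i\<bar> * M g ^ i)"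
    by (intro sum_mono mult_left_mono M_pw[OF g]) auto
  finally show ?thesis .
qed

lemma abs_coord:
  assumes g: "g \<in> vecs n" and i: "i < n"
  shows "\<bar>g i\<bar> \<le> M g"
proof -
  have "pmult (evec i) g = (\<lambda>j. g i * evec i j)" by (auto simp: pmult_def evec_def fun_eq_iff)
  hence "M (\<lambda>j. g i * evec i j) \<le> M (evec i) * M g" using M_mult[OF vecs_evec[OF i] g] by simp
  hence "\<bar>g i\<bar> * M (evec i) \<le> M (evec i) * M g" using P_hom[OF Mn vecs_evec[OF i]] by simp
  moreover have "0 < M (evec i)" using P_evec_pos[OF Mn i] .
  ultimately show ?thesis by (simp add: mult.commute)
qed

end


theorem theorem5p1:
  fixes a b \<epsilon> :: real and \<eta> :: "real \<Rightarrow> real"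
  assumes "a < b"
    and "\<forall>x\<ge>0. \<eta> x > 0"
    and "\<forall>x y. 0 \<le> x \<longrightarrow> x \<le> y \<longrightarrow> \<eta> y \<le> \<eta> x"
    and "\<epsilon> > 0"
  shows "\<exists>C0. \<forall>n N f. 0 < n \<longrightarrow> is_norm_on n N \<longrightarrow>
           is_algebra_norm_on n (dual_norm n N) \<longrightarrow>
           f \<in> vecs n \<longrightarrow> (\<forall>i<n. a \<le> f i \<and> f i \<le> b) \<longrightarrow>
           (\<exists>f1 f2 f3. f1 \<in> vecs n \<and> f2 \<in> vecs n \<and> f3 \<in> vecs n \<and>
              f = (\<lambda>i. f1 i + f2 i + f3 i) \<and>
              dual_norm n N f1 \<le> C0 \<and>
              N f2 \<le> \<eta> (dual_norm n N f1) \<and>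
              l2norm n f3 \<le> \<epsilon> \<and>
              (\<forall>i<n. a \<le> f1 i \<and> f1 i \<le> b) \<and>
              (\<forall>i<n. a \<le> f1 i + f3 i \<and> f1 i + f3 i \<le> b))"
proof -
  note ab = assms(1)
  have eta_pos: "\<And>x. 0 \<le> x \<Longrightarrow> 0 < \<eta> x" using assms(2) by auto
  have eta_mono: "\<And>x y. 0 \<le> x \<Longrightarrow> x \<le> y \<Longrightarrow> \<eta> y \<le> \<eta> x" using assms(3) by auto
  have eps: "0 < \<epsilon>" using assms(4) .
  define \<delta> where "\<delta> = \<epsilon> / 2"
  have d0: "0 < \<delta>" unfolding \<delta>_def using eps by simp
  define PP where "PP L q k \<longleftrightarrow> (\<forall>y. \<bar>y\<bar> \<le> L \<longrightarrow> \<bar>(\<Sum>i\<le>k. q i * y ^ i) - GG a b y\<bar> \<le> \<delta> \<and>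
           a \<le> (\<Sum>i\<le>k. q i * y ^ i) \<and> (\<Sum>i\<le>k. q i * y ^ i) \<le> b)" for L q k
  have "\<forall>L. \<exists>q k. 0 \<le> L \<longrightarrow> PP L q k"
    using poly_approx[OF ab _ d0] unfolding PP_def by blast
  then obtain qf kf where qk: "\<And>L. 0 \<le> L \<Longrightarrow> PP L (qf L) (kf L)" by metis
  define D where "D L = (\<Sum>i\<le>kf L. \<bar>qf L i\<bar> * L ^ i)" for L
  have D0: "0 \<le> D L" if "0 \<le> L" for L unfolding D_def using that by (intro sum_nonneg) auto
  define r2 where "r2 = (b - a) / 2"
  have r2: "0 < r2" unfolding r2_def using ab by simp
  define lamS where "lamS = rec_nat 1 (\<lambda>j l. max (l + 1) (r2 / \<eta> (D l)))"
  have lam0: "lamS 0 = 1" unfolding lamS_def by simp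
  have lamSuc: "lamS (Suc j) = max (lamS j + 1) (r2 / \<eta> (D (lamS j)))" for j
    unfolding lamS_def by simp
  have lam1: "1 \<le> lamS j" for j
    by (induction j) (auto simp: lam0 lamSuc intro: le_max_iff_disj[THEN iffD2])
  have lamlt: "lamS j < lamS (Suc j)" for j unfolding lamSuc by simp
  have lamge: "r2 / \<eta> (D (lamS j)) \<le> lamS (Suc j)" for j unfolding lamSuc by simp
  define \<theta> where "\<theta> = \<epsilon>\<^sup>2 / (8 * (b - a))"
  have th0: "0 < \<theta>" unfolding \<theta>_def using eps ab by simp
  define K where "K = nat \<lceil>r2 / \<theta>\<rceil> + 1"
  have K: "r2 < real K * \<theta>"
  proof -
    have "r2 / \<theta> < real K" unfolding K_def by linarith
    then show ?thesis using th0 by (simp add: divide_less_eq)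
  qed
  define C0 where "C0 = (\<Sum>j\<le>K. D (lamS j))"
  show ?thesis
  proof (rule exI[of _ C0], intro allI impI)
    fix n N f
    assume n0: "0 < n" and Nn: "is_norm_on n N" and alg: "is_algebra_norm_on n (dual_norm n N)"
      and f: "f \<in> vecs n" and fb: "\<forall>i<n. a \<le> f i \<and> f i \<le> b"
    interpret dsetup a b n N f using ab n0 Nn f fb by unfold_locales
    have "\<forall>j. \<exists>u. opt (lamS j) u" using opt_exists by blast
    then obtain U where U: "\<And>j. opt (lamS j) (U j)" by metis
    have "\<exists>j<K. Psi a b n (U (Suc j)) - Psi a b n (U j) \<le> \<theta>"
    proof (rule ccontr)
      assume "\<not> ?thesis"
      hence big: "\<And>j. j < K \<Longrightarrow> \<theta> \<le> Psi a b n (U (Suc j)) - Psi a b n (U j)" by force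
      have "(\<Sum>j<K. \<theta>) \<le> (\<Sum>j<K. Psi a b n (U (Suc j)) - Psi a b n (U j))"
        by (rule sum_mono) (use big in auto)
      also have "\<dots> = Psi a b n (U K) - Psi a b n (U 0)" by (rule sum_lessThan_telescope)
      also have "\<dots> \<le> r2"
      proof -
        have A: "Psi a b n (U K) \<le> 0" and B: "- ((b - a)/2) \<le> Psi a b n (U 0)"
          using Psi_bounds[OF opt_Box[OF U[of K]]] Psi_bounds[OF opt_Box[OF U[of 0]]] by auto
        then show ?thesis unfolding r2_def diff_divide_distrib by linarith
      qed
      finally have "real K * \<theta> \<le> r2" by simp
      with K show False by simp
    qed
    then obtain j where jK: "j < K" and jth: "Psi a b n (U (Suc j)) - Psi a b n (U j) \<le> \<theta>" by blast
    define lam where "lam = lamS j"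
    define mu where "mu = lamS (Suc j)"
    define u where "u = U j"
    define w where "w = U (Suc j)"
    have lam_ge: "1 \<le> lam" unfolding lam_def by (rule lam1)
    have lam0': "0 \<le> lam" using lam_ge by simp
    have lm: "lam < mu" unfolding lam_def mu_def by (rule lamlt)
    have mu0: "0 < mu" using lm lam_ge by simp
    have u: "opt lam u" unfolding lam_def u_def by (rule U)
    have w: "opt mu w" unfolding mu_def w_def by (rule U)
    define M where "M = dual_norm n N"
    have Malg: "is_algebra_norm_on n M" unfolding M_def by (rule alg)
    define g where "g = gvec a b n u"
    have gv: "g \<in> vecs n" unfolding g_def by (rule gvec_vecs)
    have Mg: "M g \<le> lam" unfolding M_def g_def by (rule M_le[OF lam0' u])
    have Mg0: "0 \<le> M g" using P_nonneg[OF Mn[OF Malg] gv] .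
    have gi: "\<bar>g i\<bar> \<le> lam" if "i < n" for i using abs_coord[OF Malg gv that] Mg by simp
    define q where "q = qf lam"
    define k where "k = kf lam"
    have PPl: "PP lam q k" unfolding q_def k_def by (rule qk[OF lam0'])
    define f1 where "f1 = pvec n q k g"
    define f2 where "f2 = (\<lambda>i. f i - w i)"
    define f3 where "f3 = (\<lambda>i. w i - f1 i)"
    have uv: "u \<in> vecs n" and wv: "w \<in> vecs n" using opt_vecs[OF u] opt_vecs[OF w] by auto
    have f1v: "f1 \<in> vecs n" unfolding f1_def by (rule pvec_vecs)
    have f2v: "f2 \<in> vecs n" unfolding f2_def using f wv by auto
    have f3v: "f3 \<in> vecs n" unfolding f3_def using wv f1v by auto
    have fsum: "f = (\<lambda>i. f1 i + f2 i + f3 i)" unfolding f2_def f3_def by (simp add: fun_eq_iff)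
    have f1val: "\<bar>f1 i - u i\<bar> \<le> \<delta> \<and> a \<le> f1 i \<and> f1 i \<le> b" if i: "i < n" for i
    proof -
      have "GG a b (g i) = u i" unfolding g_def by (rule GG_gvec[OF lam0' u i])
      moreover have "f1 i = (\<Sum>l\<le>k. q l * g i ^ l)" unfolding f1_def by (rule pvec_val[OF i])
      ultimately show ?thesis using PPl gi[OF i] unfolding PP_def by auto
    qed
    have Mf1: "M f1 \<le> D lam"
    proof -
      have "M f1 \<le> (\<Sum>l\<le>k. \<bar>q l\<bar> * M g ^ l)" unfolding f1_def by (rule M_pvec[OF Malg gv])
      also have "\<dots> \<le> (\<Sum>l\<le>k. \<bar>q l\<bar> * lam ^ l)"
        using Mg Mg0 by (intro sum_mono mult_left_mono power_mono) auto
      finally show ?thesis unfolding D_def q_def k_def .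
    qed
    have Mf1_0: "0 \<le> M f1" using P_nonneg[OF Mn[OF Malg] f1v] .
    have C0: "M f1 \<le> C0"
    proof -
      have "D lam \<le> C0" unfolding C0_def lam_def
        by (rule member_le_sum) (use jK D0 lam1 order_trans[OF zero_le_one] in auto)
      with Mf1 show ?thesis by simp
    qed
    have Nf2: "N f2 \<le> \<eta> (M f1)"
    proof -
      have "N f2 \<le> (b - a) / 2 / mu" unfolding f2_def by (rule N_small[OF mu0 w])
      also have "\<dots> \<le> \<eta> (D lam)"
      proof -
        have ep: "0 < \<eta> (D lam)" using eta_pos D0 lam0' by simp
        have "r2 / \<eta> (D lam) \<le> mu" unfolding lam_def mu_def by (rule lamge)
        hence "r2 \<le> mu * \<eta> (D lam)" using ep by (simp add: divide_le_eq)
        thus ?thesis using mu0 unfolding r2_def by (simp add: divide_le_eq mult_ac)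
      qed
      also have "\<dots> \<le> \<eta> (M f1)" using eta_mono[OF Mf1_0 Mf1] .
      finally show ?thesis .
    qed
    have l2: "l2norm n f3 \<le> \<epsilon>"
    proof -
      have pr: "(\<Sum>i<n. (w i - u i)\<^sup>2) / real n \<le> 2 * (b - a) * (Psi a b n w - Psi a b n u)"
        by (rule pair[OF lam0' lm u w])
      also have "\<dots> \<le> 2 * (b - a) * \<theta>"
        using jth ab unfolding u_def w_def by (intro mult_left_mono) auto
      also have "\<dots> = \<epsilon>\<^sup>2 / 4" unfolding \<theta>_def using ab by (simp add: field_simps)
      finally have pr2: "(\<Sum>i<n. (w i - u i)\<^sup>2) / real n \<le> \<epsilon>\<^sup>2 / 4" .
      have pt: "(f3 i)\<^sup>2 \<le> 2 * (w i - u i)\<^sup>2 + 2 * \<delta>\<^sup>2" if i: "i < n" for i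
      proof -
        have h: "\<bar>f1 i - u i\<bar> \<le> \<delta>" using f1val[OF i] by simp
        have "(u i - f1 i)\<^sup>2 \<le> \<delta>\<^sup>2"
          using h by (metis abs_minus_commute abs_ge_zero power2_abs power_mono)
        moreover have "(f3 i)\<^sup>2 \<le> 2 * (w i - u i)\<^sup>2 + 2 * (u i - f1 i)\<^sup>2"
        proof -
          have "0 \<le> ((w i - u i) - (u i - f1 i))\<^sup>2" by simp
          then show ?thesis unfolding f3_def by (simp add: power2_eq_square algebra_simps)
        qed
        ultimately show ?thesis by simp
      qed
      have "(\<Sum>i<n. (f3 i)\<^sup>2 / real n) = (\<Sum>i<n. (f3 i)\<^sup>2) / real n"
        by (simp add: sum_divide_distrib)
      also have "\<dots> \<le> (\<Sum>i<n. 2 * (w i - u i)\<^sup>2 + 2 * \<delta>\<^sup>2) / real n"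
        using n0 by (intro divide_right_mono sum_mono pt) auto
      also have "\<dots> = 2 * ((\<Sum>i<n. (w i - u i)\<^sup>2) / real n) + 2 * \<delta>\<^sup>2"
        using n0 by (simp add: sum.distrib sum_distrib_left[symmetric] add_divide_distrib)
      also have "\<dots> \<le> 2 * (\<epsilon>\<^sup>2 / 4) + 2 * \<delta>\<^sup>2" using pr2 by linarith
      also have "\<dots> = \<epsilon>\<^sup>2" unfolding \<delta>_def by (simp add: power2_eq_square)
      finally have "(\<Sum>i<n. (f3 i)\<^sup>2 / real n) \<le> \<epsilon>\<^sup>2" .
      hence "sqrt (\<Sum>i<n. (f3 i)\<^sup>2 / real n) \<le> sqrt (\<epsilon>\<^sup>2)" by (rule real_sqrt_le_mono)
      then show ?thesis unfolding l2norm_def using eps by simp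
    qed
    have box1: "\<forall>i<n. a \<le> f1 i \<and> f1 i \<le> b" using f1val by auto
    have box2: "\<forall>i<n. a \<le> f1 i + f3 i \<and> f1 i + f3 i \<le> b"
      using opt_Box[OF w] unfolding f3_def by (auto simp: Box_def)
    show "\<exists>f1 f2 f3. f1 \<in> vecs n \<and> f2 \<in> vecs n \<and> f3 \<in> vecs n \<and>
              f = (\<lambda>i. f1 i + f2 i + f3 i) \<and>
              dual_norm n N f1 \<le> C0 \<and>
              N f2 \<le> \<eta> (dual_norm n N f1) \<and>
              l2norm n f3 \<le> \<epsilon> \<and>
              (\<forall>i<n. a \<le> f1 i \<and> f1 i \<le> b) \<and>
              (\<forall>i<n. a \<le> f1 i + f3 i \<and> f1 i + f3 i \<le> b)"
      using f1v f2v f3v fsum C0 Nf2 l2 box1 box2 unfolding M_def by blast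
  qed
qed


end
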